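(* Let $\mathcal{X}$ be an input set, $\mathcal{Y}$ an output set, and $\mathcal{F}$ a set of models $f:\mathcal{X}\to\mathcal{Y}$. Let $n,m\ge 1$. For $i=1,\dots,n$ let $t_i=(p_i,S_i,\ell_i)$ be a learning task, where $p_i$ is a probability distribution on $\mathcal{X}\times\mathcal{Y}$, $\ell_i:\mathcal{Y}\times\mathcal{Y}\to[0,1]$ is a loss function, and $S_i=\{(x_{i,1},y_{i,1}),\dots,(x_{i,m},y_{i,m})\}$ is a sample of size $m$ drawn i.i.d. from $p_i$, the samples $S_1,\dots,S_n$ being drawn independently of each other. Let $\mathcal{E}$ be a set (of "global parameters") and let $l:\mathcal{E}\to\mathbb{N}$ be the length function of a prefix-free encoding of $\mathcal{E}$ (the meta-encoder). For each $E\in\mathcal{E}$, let $l_E:\bigcup_{k=1}^\infty\mathcal{F}^k\to\mathbb{N}$ be the length function of a prefix-free encoding of $\bigcup_{k=1}^\infty\mathcal{F}^k$ (the multi-task encoder given $E$). Then for any $\delta>0$, with probability at least $1-\delta$ over the sampling of $S_1,\dots,S_n$, the following holds simultaneously for all $E\in\mathcal{E}$ and all $f_1,\dots,f_n\in\mathcal{F}$: $$\mathcal{R}(f_1,\dots,f_n)\le \widehat{\mathcal{R}}(f_1,\dots,f_n)+\sqrt{\frac{\big(l(E)+l_E(f_1,\dots,f_n)\big)\log 2+\log\frac{1}{\delta}}{2mn}}.$$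
   Context: A (prefix-free) encoding of a set $\mathcal{Z}$ is a map $C:\mathcal{Z}\to\{0,1\}^*$ such that for all $z\neq z'$ in $\mathcal{Z}$, $C(z)$ is not a prefix of $C(z')$; its length function is $z\mapsto$ length of the string $C(z)$. The multi-task risk is $\mathcal{R}(f_1,\dots,f_n)=\frac1n\sum_{i=1}^n \mathbb{E}_{(x,y)\sim p_i}\ell_i(y,f_i(x))$ and the multi-task empirical risk is $\widehat{\mathcal{R}}(f_1,\dots,f_n)=\frac{1}{mn}\sum_{i=1}^n\sum_{j=1}^m \ell_i(y_{i,j},f_i(x_{i,j}))$. *)

theory Defs
  imports "HOL-Probability.Probability" "HOL-Library.Sublist"
begin

definition prefix_free_encoding :: "('z \<Rightarrow> bool list) \<Rightarrow> 'z set \<Rightarrow> bool" where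
  "prefix_free_encoding C Z \<longleftrightarrow>
     (\<forall>z\<in>Z. \<forall>z'\<in>Z. z \<noteq> z' \<longrightarrow> \<not> prefix (C z) (C z'))"

definition is_prefix_free_length :: "('z \<Rightarrow> nat) \<Rightarrow> 'z set \<Rightarrow> bool" where
  "is_prefix_free_length L Z \<longleftrightarrow>
     (\<exists>C. prefix_free_encoding C Z \<and> (\<forall>z\<in>Z. L z = length (C z)))"

text \<open>Finite nonempty tuples of models, i.e. the union over k >= 1 of F^k, as lists.\<close>
definition tuples_of :: "'a set \<Rightarrow> 'a list set" where
  "tuples_of F = {fs. fs \<noteq> [] \<and> set fs \<subseteq> F}"

definition mt_risk ::
  "nat \<Rightarrow> (nat \<Rightarrow> ('x \<times> 'y) measure) \<Rightarrow> (nat \<Rightarrow> 'y \<Rightarrow> 'y \<Rightarrow> real)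
   \<Rightarrow> (nat \<Rightarrow> 'x \<Rightarrow> 'y) \<Rightarrow> real" where
  "mt_risk n p loss fs =
     (1 / real n) * (\<Sum>i<n. integral\<^sup>L (p i) (\<lambda>(x, y). loss i y (fs i x)))"

text \<open>Multi-task empirical risk; the sample is S (i,j) = (x_{i,j}, y_{i,j}).\<close>
definition mt_emp_risk ::
  "nat \<Rightarrow> nat \<Rightarrow> (nat \<Rightarrow> 'y \<Rightarrow> 'y \<Rightarrow> real) \<Rightarrow> (nat \<times> nat \<Rightarrow> 'x \<times> 'y)
   \<Rightarrow> (nat \<Rightarrow> 'x \<Rightarrow> 'y) \<Rightarrow> real" where
  "mt_emp_risk n m loss S fs =
     (1 / (real m * real n)) *
       (\<Sum>i<n. \<Sum>j<m. loss i (snd (S (i, j))) (fs i (fst (S (i, j)))))"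

definition sample_measure ::
  "nat \<Rightarrow> nat \<Rightarrow> (nat \<Rightarrow> ('x \<times> 'y) measure) \<Rightarrow> (nat \<times> nat \<Rightarrow> 'x \<times> 'y) measure" where
  "sample_measure n m p = (\<Pi>\<^sub>M ij \<in> {..<n} \<times> {..<m}. p (fst ij))"

end

theory Submission
  imports Defs
begin
lemma hoeff:
  fixes n m :: nat and p :: "nat \<Rightarrow> ('x \<times> 'y) measure"
    and loss :: "nat \<Rightarrow> 'y \<Rightarrow> 'y \<Rightarrow> real" and fs :: "nat \<Rightarrow> 'x \<Rightarrow> 'y" and \<epsilon> :: real
  assumes n: "n \<ge> 1" and m: "m \<ge> 1"
    and P: "\<And>i. i < n \<Longrightarrow> prob_space (p i)"
    and B: "\<And>i y y'. i < n \<Longrightarrow> 0 \<le> loss i y y' \<and> loss i y y' \<le> 1"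
    and Ms: "\<And>i. i < n \<Longrightarrow> (\<lambda>(x, y). loss i y (fs i x)) \<in> borel_measurable (p i)"
    and eps: "\<epsilon> \<ge> 0"
  shows "measure (sample_measure n m p)
          {S \<in> space (sample_measure n m p). mt_risk n p loss fs > mt_emp_risk n m loss S fs + \<epsilon>}
         \<le> exp (-2 * real m * real n * \<epsilon>\<^sup>2)"
proof -
  define J where "J = {..<n} \<times> {..<m}"
  define M' where "M' = (\<lambda>ij::nat\<times>nat. p (fst ij))"
  define \<Omega> where "\<Omega> = sample_measure n m p"
  have \<Omega>: "\<Omega> = PiM J M'" unfolding \<Omega>_def sample_measure_def J_def M'_def by simp
  have PJ: "prob_space (M' ij)" if "ij \<in> J" for ij
    using that P by (auto simp: J_def M'_def)
  interpret prob_space \<Omega> unfolding \<Omega> by (rule prob_space_PiM) (rule PJ)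
  define Y where "Y = (\<lambda>ij::nat\<times>nat. \<lambda>(x, y). loss (fst ij) y (fs (fst ij) x))"
  define X where "X = (\<lambda>ij S. Y ij (S ij))"
  have Ym: "Y ij \<in> borel_measurable (M' ij)" if "ij \<in> J" for ij
    using that Ms unfolding Y_def M'_def J_def by (cases ij) auto
  have comp: "(\<lambda>S. S ij) \<in> measurable \<Omega> (M' ij)" if "ij \<in> J" for ij
    unfolding \<Omega> using that by (rule measurable_component_singleton)
  have indc: "indep_vars M' (\<lambda>ij S. S ij) J"
  proof (subst indep_vars_iff_distr_eq_PiM')
    show "J \<noteq> {}" using n m by (auto simp: J_def lessThan_empty_iff)
    show "random_variable (M' ij) (\<lambda>S. S ij)" if "ij \<in> J" for ij using comp[OF that] .
    have "distr \<Omega> (Pi\<^sub>M J M') (\<lambda>x. \<lambda>i\<in>J. x i) = distr \<Omega> \<Omega> (\<lambda>x. x)"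
      unfolding \<Omega> by (rule distr_cong) (auto simp: space_PiM)
    also have "\<dots> = \<Omega>" by (rule distr_id)
    also have "\<dots> = (\<Pi>\<^sub>M i\<in>J. distr \<Omega> (M' i) (\<lambda>x. x i))"
      unfolding \<Omega> by (rule PiM_cong) (auto simp: distr_PiM_component PJ)
    finally show "distr \<Omega> (Pi\<^sub>M J M') (\<lambda>x. \<lambda>i\<in>J. x i) = (\<Pi>\<^sub>M i\<in>J. distr \<Omega> (M' i) (\<lambda>x. x i))" .
  qed
  have indX: "indep_vars (\<lambda>_. borel) X J"
    unfolding X_def by (rule indep_vars_compose2[OF indc Ym])
  have finJ: "finite J" by (simp add: J_def)
  interpret H: Hoeffding_ineq \<Omega> J X "\<lambda>_. 0" "\<lambda>_. 1" "\<Sum>i\<in>J. expectation (X i)"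
  proof unfold_locales
    show "finite J" by (rule finJ)
    show "indep_vars (\<lambda>_. borel) X J" by (rule indX)
    fix ij assume "ij \<in> J"
    then show "AE x in \<Omega>. X ij x \<in> {0..1}"
      using B by (intro AE_I2) (auto simp: X_def Y_def J_def split: prod.splits)
  qed simp
  have EX: "expectation (X ij) = integral\<^sup>L (p (fst ij)) (\<lambda>(x, y). loss (fst ij) y (fs (fst ij) x))"
    if "ij \<in> J" for ij
  proof -
    have "expectation (X ij) = integral\<^sup>L (distr \<Omega> (M' ij) (\<lambda>S. S ij)) (Y ij)"
      unfolding X_def by (rule integral_distr[symmetric, OF comp[OF that] Ym[OF that]])
    also have "distr \<Omega> (M' ij) (\<lambda>S. S ij) = M' ij"
      unfolding \<Omega> by (rule distr_PiM_component[OF PJ that]) 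
    finally show ?thesis by (simp add: M'_def Y_def)
  qed
  define R where "R = (\<Sum>i<n. integral\<^sup>L (p i) (\<lambda>(x, y). loss i y (fs i x)))"
  have mu: "(\<Sum>i\<in>J. expectation (X i)) = real m * R"
  proof -
    have "(\<Sum>i\<in>J. expectation (X i)) = (\<Sum>ij\<in>J. integral\<^sup>L (p (fst ij)) (\<lambda>(x, y). loss (fst ij) y (fs (fst ij) x)))"
      by (rule sum.cong) (auto simp: EX)
    also have "\<dots> = (\<Sum>i<n. \<Sum>j<m. integral\<^sup>L (p i) (\<lambda>(x, y). loss i y (fs i x)))"
      unfolding J_def by (subst sum.cartesian_product) (simp add: case_prod_beta)
    finally show ?thesis by (simp add: R_def sum_distrib_left mult.commute)
  qed
  have sX: "(\<Sum>ij\<in>J. X ij S) = real m * real n * mt_emp_risk n m loss S fs" for S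
  proof -
    have "(\<Sum>ij\<in>J. X ij S) = (\<Sum>i<n. \<Sum>j<m. loss i (snd (S (i, j))) (fs i (fst (S (i, j)))))"
      unfolding J_def X_def Y_def by (subst sum.cartesian_product) (simp add: case_prod_beta)
    then show ?thesis using n m by (simp add: mt_emp_risk_def)
  qed
  have rk: "mt_risk n p loss fs = R / real n" by (simp add: mt_risk_def R_def)
  have sub: "{S \<in> space \<Omega>. mt_risk n p loss fs > mt_emp_risk n m loss S fs + \<epsilon>}
     \<subseteq> {S \<in> space \<Omega>. (\<Sum>ij\<in>J. X ij S) \<le> (\<Sum>i\<in>J. expectation (X i)) - real m * real n * \<epsilon>}"
  proof safe
    fix S assume "S \<in> space \<Omega>" and lt: "mt_emp_risk n m loss S fs + \<epsilon> < mt_risk n p loss fs"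
    have "real m * real n * (mt_emp_risk n m loss S fs + \<epsilon>) \<le> real m * real n * mt_risk n p loss fs"
      using lt n m by (intro mult_left_mono) auto
    also have "real m * real n * mt_risk n p loss fs = real m * R" using n by (simp add: rk)
    finally show "(\<Sum>ij\<in>J. X ij S) \<le> (\<Sum>i\<in>J. expectation (X i)) - real m * real n * \<epsilon>"
      by (simp add: sX mu algebra_simps)
  qed
  have Xm: "(\<lambda>S. \<Sum>ij\<in>J. X ij S) \<in> borel_measurable \<Omega>"
    unfolding X_def by (intro borel_measurable_sum measurable_compose[OF comp Ym])
  have "prob {S \<in> space \<Omega>. mt_risk n p loss fs > mt_emp_risk n m loss S fs + \<epsilon>}
      \<le> prob {S \<in> space \<Omega>. (\<Sum>ij\<in>J. X ij S) \<le> (\<Sum>i\<in>J. expectation (X i)) - real m * real n * \<epsilon>}"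
    by (rule finite_measure_mono[OF sub]) (use Xm in measurable)
  also have "\<dots> \<le> exp (-2 * (real m * real n * \<epsilon>)\<^sup>2 / (\<Sum>i\<in>J. (1 - 0)\<^sup>2))"
    by (rule H.Hoeffding_ineq_le) (use eps n m finJ in \<open>auto simp: J_def\<close>)
  also have "(\<Sum>i\<in>J. (1 - 0::real)\<^sup>2) = real m * real n" by (simp add: J_def)
  also have "-2 * (real m * real n * \<epsilon>)\<^sup>2 / (real m * real n) = -2 * real m * real n * \<epsilon>\<^sup>2"
    using n m by (simp add: power2_eq_square field_simps)
  finally show ?thesis by (simp add: \<Omega>_def)
qed

lemma kraft_aux:
  "\<forall>W::bool list set. finite W \<and> (\<forall>w\<in>W. length w \<le> k) \<and> (\<forall>u\<in>W. \<forall>v\<in>W. u \<noteq> v \<longrightarrow> \<not> prefix u v)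
     \<longrightarrow> (\<Sum>w\<in>W. (1/2::real) ^ length w) \<le> 1"
proof (induction k)
  case 0
  show ?case
  proof (intro allI impI)
    fix W :: "bool list set" assume "finite W \<and> (\<forall>w\<in>W. length w \<le> 0) \<and> (\<forall>u\<in>W. \<forall>v\<in>W. u \<noteq> v \<longrightarrow> \<not> prefix u v)"
    then have "W \<subseteq> {[]}" by auto
    then have "W = {} \<or> W = {[]}" by blast
    then show "(\<Sum>w\<in>W. (1/2::real) ^ length w) \<le> 1" by auto
  qed
next
  case (Suc k)
  show ?case
  proof (intro allI impI)
    fix W :: "bool list set" assume H: "finite W \<and> (\<forall>w\<in>W. length w \<le> Suc k) \<and> (\<forall>u\<in>W. \<forall>v\<in>W. u \<noteq> v \<longrightarrow> \<not> prefix u v)"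
    then have fin: "finite W" and len: "\<forall>w\<in>W. length w \<le> Suc k"
      and pf: "\<forall>u\<in>W. \<forall>v\<in>W. u \<noteq> v \<longrightarrow> \<not> prefix u v" by auto
    show "(\<Sum>w\<in>W. (1/2::real) ^ length w) \<le> 1"
    proof (cases "[] \<in> W")
      case True
      have "W = {[]}"
      proof
        show "W \<subseteq> {[]}"
        proof
          fix x assume "x \<in> W"
          then show "x \<in> {[]}" using pf True by (metis Nil_prefix singletonI)
        qed
      qed (use True in auto)
      then show ?thesis by simp
    next
      case False
      define W1 where "W1 = Cons True -` W"
      define W2 where "W2 = Cons False -` W"
      have f1: "finite W1" unfolding W1_def by (rule finite_vimageI[OF fin]) simp
      have f2: "finite W2" unfolding W2_def by (rule finite_vimageI[OF fin]) simp
      have W: "W = Cons True ` W1 \<union> Cons False ` W2"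
      proof
        show "W \<subseteq> Cons True ` W1 \<union> Cons False ` W2"
        proof
          fix w assume "w \<in> W"
          with False obtain b t where "w = b # t" by (cases w) auto
          with \<open>w \<in> W\<close> show "w \<in> Cons True ` W1 \<union> Cons False ` W2"
            by (cases b) (auto simp: W1_def W2_def)
        qed
      qed (auto simp: W1_def W2_def)
      have "\<forall>w\<in>W1. length w \<le> k" using len unfolding W1_def by fastforce
      moreover have "\<forall>u\<in>W1. \<forall>v\<in>W1. u \<noteq> v \<longrightarrow> \<not> prefix u v"
      proof (intro ballI impI notI)
        fix u v assume "u \<in> W1" "v \<in> W1" "u \<noteq> v" "prefix u v"
        then have "True # u \<in> W" "True # v \<in> W" "True # u \<noteq> True # v" "prefix (True # u) (True # v)"
          by (auto simp: W1_def)
        then show False using pf by blast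
      qed
      ultimately have s1: "(\<Sum>w\<in>W1. (1/2::real) ^ length w) \<le> 1"
        using Suc.IH[THEN spec, of W1] f1 by blast
      have "\<forall>w\<in>W2. length w \<le> k" using len unfolding W2_def by fastforce
      moreover have "\<forall>u\<in>W2. \<forall>v\<in>W2. u \<noteq> v \<longrightarrow> \<not> prefix u v"
      proof (intro ballI impI notI)
        fix u v assume "u \<in> W2" "v \<in> W2" "u \<noteq> v" "prefix u v"
        then have "False # u \<in> W" "False # v \<in> W" "False # u \<noteq> False # v" "prefix (False # u) (False # v)"
          by (auto simp: W2_def)
        then show False using pf by blast
      qed
      ultimately have s2: "(\<Sum>w\<in>W2. (1/2::real) ^ length w) \<le> 1"
        using Suc.IH[THEN spec, of W2] f2 by blast
      have "(\<Sum>w\<in>W. (1/2::real) ^ length w)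
          = (\<Sum>w\<in>Cons True ` W1. (1/2::real) ^ length w) + (\<Sum>w\<in>Cons False ` W2. (1/2::real) ^ length w)"
        unfolding W by (rule sum.union_disjoint) (use f1 f2 in auto)
      also have "\<dots> = (\<Sum>w\<in>W1. (1/2::real) ^ length w) / 2 + (\<Sum>w\<in>W2. (1/2::real) ^ length w) / 2"
        by (simp add: sum.reindex sum_divide_distrib)
      also have "\<dots> \<le> 1" using s1 s2 by simp
      finally show ?thesis .
    qed
  qed
qed

lemma kraft:
  assumes "finite (W :: bool list set)" "\<forall>u\<in>W. \<forall>v\<in>W. u \<noteq> v \<longrightarrow> \<not> prefix u v"
  shows "(\<Sum>w\<in>W. (1/2::real) ^ length w) \<le> 1"
proof -
  have "\<forall>w\<in>W. length w \<le> Max (length ` W)" using assms(1) by auto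
  then show ?thesis using kraft_aux[of "Max (length ` W)"] assms by blast
qed

lemma emp_meas:
  assumes Ms: "\<And>i. i < n \<Longrightarrow> (\<lambda>(x, y). loss i y (fs i x)) \<in> borel_measurable (p i)"
  shows "(\<lambda>S. mt_emp_risk n m loss S fs) \<in> borel_measurable (sample_measure n m p)"
proof -
  have "(\<lambda>S. (\<lambda>(x, y). loss i y (fs i x)) (S (i, j))) \<in> borel_measurable (sample_measure n m p)"
    if "i < n" "j < m" for i j
  proof (rule measurable_compose[OF _ Ms[OF that(1)]])
    have "(\<lambda>S. S (i, j)) \<in> measurable (sample_measure n m p) (p (fst (i,j)))"
      unfolding sample_measure_def by (rule measurable_component_singleton) (use that in auto)
    then show "(\<lambda>S. S (i, j)) \<in> measurable (sample_measure n m p) (p i)" by simp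
  qed
  then show ?thesis unfolding mt_emp_risk_def
    by (intro borel_measurable_times borel_measurable_const borel_measurable_sum) (auto simp: case_prod_beta)
qed

theorem theorem2:
  fixes F :: "('x \<Rightarrow> 'y) set"
    and n m :: nat
    and p :: "nat \<Rightarrow> ('x \<times> 'y) measure"
    and loss :: "nat \<Rightarrow> 'y \<Rightarrow> 'y \<Rightarrow> real"
    and \<E> :: "'e set"
    and l :: "'e \<Rightarrow> nat"
    and lE :: "'e \<Rightarrow> ('x \<Rightarrow> 'y) list \<Rightarrow> nat"
    and \<delta> :: real
  assumes "n \<ge> 1" and "m \<ge> 1"
    and "\<And>i. i < n \<Longrightarrow> prob_space (p i)"
    and "\<And>i y y'. i < n \<Longrightarrow> 0 \<le> loss i y y' \<and> loss i y y' \<le> 1"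
    and "\<And>i f. i < n \<Longrightarrow> f \<in> F \<Longrightarrow>
           (\<lambda>(x, y). loss i y (f x)) \<in> borel_measurable (p i)"
    and "is_prefix_free_length l \<E>"
    and "\<And>E. E \<in> \<E> \<Longrightarrow> is_prefix_free_length (lE E) (tuples_of F)"
    and "\<delta> > 0"
  shows "\<exists>A \<in> sets (sample_measure n m p).
           measure (sample_measure n m p) A \<ge> 1 - \<delta> \<and>
           (\<forall>S \<in> A. \<forall>E \<in> \<E>. \<forall>fs. (\<forall>i<n. fs i \<in> F) \<longrightarrow>
              mt_risk n p loss fs \<le>
                mt_emp_risk n m loss S fs +
                sqrt (((real (l E) + real (lE E (map fs [0..<n]))) * ln 2 + ln (1 / \<delta>))
                      / (2 * real m * real n)))"
proof (cases "\<delta> \<ge> 1")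
  case True
  show ?thesis
    by (rule bexI[of _ "{}"]) (use True in auto)
next
  case False
  note n = assms(1) and m = assms(2) and P = assms(3) and B = assms(4) and Ms = assms(5)
  have d1: "\<delta> < 1" and d0: "\<delta> > 0" using False assms(8) by auto
  define \<Omega> where "\<Omega> = sample_measure n m p"
  interpret prob_space \<Omega> unfolding \<Omega>_def sample_measure_def
    by (rule prob_space_PiM) (use P in auto)
  obtain C where C: "prefix_free_encoding C \<E>" "\<And>z. z \<in> \<E> \<Longrightarrow> l z = length (C z)"
    using assms(6) unfolding is_prefix_free_length_def by blast
  have "\<forall>E\<in>\<E>. \<exists>CE. prefix_free_encoding CE (tuples_of F) \<and> (\<forall>z\<in>tuples_of F. lE E z = length (CE z))"
    using assms(7) unfolding is_prefix_free_length_def by blast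
  from bchoice[OF this] obtain CE where CE0: "\<forall>E\<in>\<E>. prefix_free_encoding (CE E) (tuples_of F) \<and> (\<forall>z\<in>tuples_of F. lE E z = length (CE E z))"
    by blast
  have CE: "\<And>E. E \<in> \<E> \<Longrightarrow> prefix_free_encoding (CE E) (tuples_of F)"
     "\<And>E z. E \<in> \<E> \<Longrightarrow> z \<in> tuples_of F \<Longrightarrow> lE E z = length (CE E z)"
    using CE0 by auto
  define I where "I = {(E, xs). E \<in> \<E> \<and> length xs = n \<and> set xs \<subseteq> F}"
  define code where "code = (\<lambda>(E, xs). C E @ CE E xs)"
  have tup: "xs \<in> tuples_of F" if "(E, xs) \<in> I" for E xs
    using that n by (auto simp: I_def tuples_of_def)
  have pf: "\<forall>a\<in>I. \<forall>b\<in>I. a \<noteq> b \<longrightarrow> \<not> prefix (code a) (code b)"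
  proof (intro ballI impI notI)
    fix a b assume a: "a \<in> I" and b: "b \<in> I" and ne: "a \<noteq> b" and pr: "prefix (code a) (code b)"
    obtain E xs where ae: "a = (E, xs)" by (cases a)
    obtain E' xs' where be: "b = (E', xs')" by (cases b)
    have E: "E \<in> \<E>" "E' \<in> \<E>" using a b ae be by (auto simp: I_def)
    have pr': "prefix (C E @ CE E xs) (C E' @ CE E' xs')" using pr ae be by (simp add: code_def)
    have "prefix (C E) (C E @ CE E xs)" by simp
    then have p1: "prefix (C E) (C E' @ CE E' xs')" using pr' by (rule prefix_order.trans)
    have p2: "prefix (C E') (C E' @ CE E' xs')" by simp
    have cmp: "prefix (C E) (C E') \<or> prefix (C E') (C E)"
      by (rule prefix_same_cases[OF p1 p2])
    have EE: "E = E'"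
    proof (rule ccontr)
      assume "E \<noteq> E'"
      then have "\<not> prefix (C E) (C E')" "\<not> prefix (C E') (C E)"
        using C(1) E unfolding prefix_free_encoding_def by auto
      then show False using cmp by blast
    qed
    then have "prefix (CE E xs) (CE E xs')" using pr' by simp
    moreover have "xs \<noteq> xs'" using ne ae be EE by simp
    moreover have "xs \<in> tuples_of F" using a ae tup by blast
    moreover have "xs' \<in> tuples_of F" using b be tup by blast
    ultimately show False using CE(1)[OF E(1)] unfolding prefix_free_encoding_def by blast
  qed
  have inj: "inj_on code I"
  proof (rule inj_onI, rule ccontr)
    fix a b assume "a \<in> I" "b \<in> I" "code a = code b" "a \<noteq> b"
    then show False using pf[rule_format, of a b] by simp
  qed
  have cI: "countable I"
    by (rule countable_image_inj_on[OF _ inj]) simp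
  have lc: "length (code (E, xs)) = l E + lE E xs" if "(E, xs) \<in> I" for E xs
  proof -
    have "E \<in> \<E>" using that by (simp add: I_def)
    then show ?thesis by (simp add: code_def C(2) CE(2)[OF _ tup[OF that]])
  qed
  define eps where "eps = (\<lambda>(E, xs). sqrt (((real (l E) + real (lE E xs)) * ln 2 + ln (1 / \<delta>))
                      / (2 * real m * real n)))"
  define Bad where "Bad = (\<lambda>(E, xs). {S \<in> space \<Omega>. mt_risk n p loss (\<lambda>i. xs ! i) >
       mt_emp_risk n m loss S (\<lambda>i. xs ! i) + eps (E, xs)})"
  have Bad_sets: "Bad a \<in> sets \<Omega>" if "a \<in> I" for a
  proof -
    obtain E xs where ae: "a = (E, xs)" by (cases a)
    have "\<And>i. i < n \<Longrightarrow> xs ! i \<in> F" using that ae by (auto simp: I_def)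
    then have "(\<lambda>S. mt_emp_risk n m loss S (\<lambda>i. xs ! i)) \<in> borel_measurable \<Omega>"
      unfolding \<Omega>_def by (intro emp_meas Ms)
    note [measurable] = this
    show ?thesis unfolding Bad_def ae prod.case by measurable
  qed
  have Bad_prob: "prob (Bad a) \<le> (1/2) ^ length (code a) * \<delta>" if "a \<in> I" for a
  proof -
    obtain E xs where ae: "a = (E, xs)" by (cases a)
    define L where "L = real (l E) + real (lE E xs)"
    have l0: "ln \<delta> < 0" using d0 d1 by simp
    have l1: "L * ln 2 \<ge> 0" by (simp add: L_def)
    have arg: "L * ln 2 + ln (1 / \<delta>) \<ge> 0" proof -
      have "ln (1 / \<delta>) = - ln \<delta>" using d0 by (simp add: ln_div)
      then show ?thesis using l0 l1 by linarith
    qed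
    have "prob (Bad a) \<le> exp (-2 * real m * real n * (eps a)\<^sup>2)"
      unfolding Bad_def ae \<Omega>_def prod.case
      by (rule hoeff[OF n m P B]) (use that ae arg[unfolded L_def] n m in \<open>auto simp: I_def eps_def intro!: Ms\<close>)
    also have "-2 * real m * real n * (eps a)\<^sup>2 = - (L * ln 2) + ln \<delta>"
      using arg n m d0 by (simp add: eps_def ae L_def ln_div field_simps)
    also have "exp (- (L * ln 2) + ln \<delta>) = (1/2) ^ length (code a) * \<delta>"
    proof -
      have "exp (- (L * ln 2)) = exp (real (length (code a)) * ln (1/2))"
        using lc that ae by (simp add: L_def ln_div)
      also have "\<dots> = (1/2) ^ length (code a)" by (simp add: exp_of_nat_mult)
      finally have e: "exp (- (L * ln 2)) = (1/2) ^ length (code a)" .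
      have "exp (- (L * ln 2) + ln \<delta>) = exp (- (L * ln 2)) * exp (ln \<delta>)" by (rule exp_add)
      then show ?thesis using e d0 by simp
    qed
    finally show ?thesis .
  qed
  have fin_sum: "(\<Sum>a\<in>K. prob (Bad a)) \<le> \<delta>" if "finite K" "K \<subseteq> I" for K
  proof -
    have "(\<Sum>a\<in>K. prob (Bad a)) \<le> (\<Sum>a\<in>K. (1/2) ^ length (code a) * \<delta>)"
      using that Bad_prob by (intro sum_mono) auto
    also have "\<dots> = (\<Sum>w\<in>code ` K. (1/2::real) ^ length w) * \<delta>"
    proof -
      have "inj_on code K" using inj that(2) by (rule inj_on_subset)
      then show ?thesis by (simp add: sum_distrib_right sum.reindex)
    qed
    also have "\<dots> \<le> 1 * \<delta>"
    proof (rule mult_right_mono)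
      have "\<forall>u\<in>code ` K. \<forall>v\<in>code ` K. u \<noteq> v \<longrightarrow> \<not> prefix u v"
      proof (intro ballI impI)
        fix u v assume "u \<in> code ` K" "v \<in> code ` K" "u \<noteq> v"
        then obtain a b where "a \<in> K" "b \<in> K" "u = code a" "v = code b" by blast
        moreover have "a \<noteq> b" using calculation \<open>u \<noteq> v\<close> by blast
        ultimately show "\<not> prefix u v" using pf[rule_format, of a b] that(2) by blast
      qed
      then show "(\<Sum>w\<in>code ` K. (1/2::real) ^ length w) \<le> 1"
        using that(1) by (intro kraft) auto
    qed (use d0 in simp)
    finally show ?thesis by simp
  qed
  define U where "U = (\<Union>a\<in>I. Bad a)"
  have U: "U \<in> sets \<Omega> \<and> prob U \<le> \<delta>"
  proof (cases "I = {}")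
    case True
    then show ?thesis using d0 by (simp add: U_def)
  next
    case False
    define g where "g = from_nat_into I"
    have rg: "range g = I" unfolding g_def using range_from_nat_into[OF False cI] .
    define Ak where "Ak = (\<lambda>k. \<Union>j<k. Bad (g j))"
    have gI: "g j \<in> I" for j using rg by auto
    have Ak_sets: "Ak k \<in> sets \<Omega>" for k unfolding Ak_def using Bad_sets gI by blast
    have UA: "U = (\<Union>k. Ak k)"
      unfolding U_def Ak_def rg[symmetric] by blast
    have inc: "incseq Ak" unfolding Ak_def by (intro monoI UN_mono) auto
    have "(\<lambda>k. prob (Ak k)) \<longlonglongrightarrow> prob (\<Union>k. Ak k)"
      by (rule finite_Lim_measure_incseq) (use Ak_sets inc in auto)
    moreover have "prob (Ak k) \<le> \<delta>" for k
    proof -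
      have "Ak k = (\<Union>a\<in>g ` {..<k}. Bad a)" unfolding Ak_def by blast
      moreover have "prob (\<Union>a\<in>g ` {..<k}. Bad a) \<le> (\<Sum>a\<in>g ` {..<k}. prob (Bad a))"
      proof (rule measure_UNION_le)
        fix a assume "a \<in> g ` {..<k}"
        then have "a \<in> I" using gI by blast
        then show "Bad a \<in> events" by (rule Bad_sets)
      qed simp
      ultimately have "prob (Ak k) \<le> (\<Sum>a\<in>g ` {..<k}. prob (Bad a))" by simp
      also have "\<dots> \<le> \<delta>" using gI by (intro fin_sum) auto
      finally show ?thesis .
    qed
    ultimately have "prob (\<Union>k. Ak k) \<le> \<delta>"
      by (intro LIMSEQ_le_const2) auto
    then show ?thesis using UA Ak_sets by auto
  qed
  show ?thesis
  proof (rule bexI[of _ "space \<Omega> - U"])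
    show "space \<Omega> - U \<in> sets (sample_measure n m p)" using U by (auto simp: \<Omega>_def)
    have "prob (space \<Omega> - U) = 1 - prob U" using U by (intro prob_compl) auto
    then show "measure (sample_measure n m p) (space \<Omega> - U) \<ge> 1 - \<delta> \<and>
           (\<forall>S \<in> space \<Omega> - U. \<forall>E \<in> \<E>. \<forall>fs. (\<forall>i<n. fs i \<in> F) \<longrightarrow>
              mt_risk n p loss fs \<le>
                mt_emp_risk n m loss S fs +
                sqrt (((real (l E) + real (lE E (map fs [0..<n]))) * ln 2 + ln (1 / \<delta>))
                      / (2 * real m * real n)))"
    proof (intro conjI ballI allI impI)
      show "measure (sample_measure n m p) (space \<Omega> - U) \<ge> 1 - \<delta>"
        using U \<open>prob (space \<Omega> - U) = 1 - prob U\<close> by (simp add: \<Omega>_def)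
    next
      fix S E fs assume S: "S \<in> space \<Omega> - U" and E: "E \<in> \<E>" and fs: "\<forall>i<n. fs i \<in> F"
      define xs where "xs = map fs [0..<n]"
      have aI: "(E, xs) \<in> I" using E fs by (auto simp: I_def xs_def)
      have "S \<notin> Bad (E, xs)" using S aI unfolding U_def by blast
      moreover have "S \<in> space \<Omega>" using S by blast
      ultimately have "\<not> mt_risk n p loss (\<lambda>i. xs ! i) > mt_emp_risk n m loss S (\<lambda>i. xs ! i) + eps (E, xs)"
        unfolding Bad_def prod.case by blast
      moreover have "mt_risk n p loss (\<lambda>i. xs ! i) = mt_risk n p loss fs"
        unfolding mt_risk_def xs_def by (intro arg_cong2[where f="(*)"] sum.cong refl) simp
      moreover have "mt_emp_risk n m loss S (\<lambda>i. xs ! i) = mt_emp_risk n m loss S fs"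
        unfolding mt_emp_risk_def xs_def by (intro arg_cong2[where f="(*)"] sum.cong refl) simp
      ultimately show "mt_risk n p loss fs \<le> mt_emp_risk n m loss S fs +
                sqrt (((real (l E) + real (lE E (map fs [0..<n]))) * ln 2 + ln (1 / \<delta>))
                      / (2 * real m * real n))"
        by (simp add: eps_def xs_def)
    qed
  qed
qed
end
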